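(* Let $\mathcal H$ be an HDML model, $\varphi$ a formula, and $Q_n^f$ the filtration classes defined below. For $n\ge1$, $1\le i\le n$ and $[q]\in Q_n^f$, define $s_i^f([q])=[r]$ iff $s_i(p)\in[r]$ for all $p\in[q]$, and $t_i^f([q])=[r]$ iff $t_i(p)\in[r]$ for all $p\in[q]$. Then (1) $s_i^f$ and $t_i^f$ are well-defined total maps $Q_n^f\to Q_{n-1}^f$; and (2) they satisfy the cubical laws $\alpha^f_i\circ\beta^f_j=\beta^f_{j-1}\circ\alpha^f_i$ for $1\le i<j\le n$, $\alpha,\beta\in\{s,t\}$. Consequently $(\bigcup_n Q_n^f,\bar s^f,\bar t^f)$ is a cubical set.
   Context: A cubical set consists of pairwise disjoint sets $Q_n$ ($n\in\mathbb N$), $Q=\bigcup_n Q_n$, and for every $n\ge1$ and $1\le i\le n$ maps $s_i,t_i:Q_n\to Q_{n-1}$ satisfying the cubical laws $\alpha_i\circ\beta_j=\beta_{j-1}\circ\alpha_i$ for all $1\le i<j\le n$ and $\alpha,\beta\in\{s,t\}$. Elements of $Q_n$ are cells of dimension $n$. An HDML model is $\mathcal H=(Q,\bar s,\bar t,l,V)$ where $(Q,\bar s,\bar t)$ is a cubical set, $l:Q_1\to\Sigma$ is a labeling with $l(s_i(q))=l(t_i(q))$ for $q\in Q_2$, $i\in\{1,2\}$, and $V:Q\to 2^{AP}$ a valuation. HDML formulas: $\varphi::=p\mid\bot\mid\varphi\to\varphi\mid\langle\mathsf s\rangle\varphi\mid\langle\mathsf t\rangle\varphi$ ($p\in AP$).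 Satisfaction at $q\in Q_n$: $\mathcal H,q\models p$ iff $p\in V(q)$; $\bot$ never holds; $\to$ classical; $\mathcal H,q\models\langle\mathsf s\rangle\psi$ iff there are $q'\in Q_{n+1}$ and $1\le i\le n+1$ with $s_i(q')=q$ and $\mathcal H,q'\models\psi$; $\mathcal H,q\models\langle\mathsf t\rangle\psi$ iff there is $1\le i\le n$ with $\mathcal H,t_i(q)\models\psi$. $\mathcal C(\varphi)$ is the set of subformulas of $\varphi$. For $q,q'$ of the same dimension, $q\equiv q'$ iff for every $\psi\in\mathcal C(\varphi)$, $\mathcal H,q\models\psi\iff\mathcal H,q'\models\psi$. For $q\in Q_0$, $[q]=\{q'\in Q_0:q\equiv q'\}$; for $q\in Q_n$, $n\ge1$, $[q]=\{q'\in Q_n: q\equiv q'$, $t_i(q')\in[t_i(q)]$ and $s_i(q')\in[s_i(q)]$ for all $1\le i\le n\}$; $Q_n^f=\{[q]:q\in Q_n\}$. *)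

theory Defs
  imports Main
begin

definition cubical_set :: "(nat \<Rightarrow> 'a set) \<Rightarrow> (nat \<Rightarrow> 'a \<Rightarrow> 'a) \<Rightarrow> (nat \<Rightarrow> 'a \<Rightarrow> 'a) \<Rightarrow> bool" where
  "cubical_set Q s t \<longleftrightarrow>
     (\<forall>m n. m \<noteq> n \<longrightarrow> Q m \<inter> Q n = {}) \<and>
     (\<forall>n \<ge> 1. \<forall>i \<in> {1..n}. \<forall>q \<in> Q n. s i q \<in> Q (n - 1) \<and> t i q \<in> Q (n - 1)) \<and>
     (\<forall>n. \<forall>q \<in> Q n. \<forall>i j. 1 \<le> i \<and> i < j \<and> j \<le> n \<longrightarrow>
        (\<forall>\<alpha> \<in> {s, t}. \<forall>\<beta> \<in> {s, t}. \<alpha> i (\<beta> j q) = \<beta> (j - 1) (\<alpha> i q)))"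

definition hdml_model :: "(nat \<Rightarrow> 'a set) \<Rightarrow> (nat \<Rightarrow> 'a \<Rightarrow> 'a) \<Rightarrow> (nat \<Rightarrow> 'a \<Rightarrow> 'a)
    \<Rightarrow> ('a \<Rightarrow> 'sigma) \<Rightarrow> ('a \<Rightarrow> 'ap set) \<Rightarrow> bool" where
  "hdml_model Q s t l V \<longleftrightarrow> cubical_set Q s t \<and>
     (\<forall>q \<in> Q 2. \<forall>i \<in> {1, 2}. l (s i q) = l (t i q))"

datatype 'ap hform = Atom 'ap | Bot | Imp "'ap hform" "'ap hform"
  | DiaS "'ap hform" | DiaT "'ap hform"

primrec sat :: "(nat \<Rightarrow> 'a set) \<Rightarrow> (nat \<Rightarrow> 'a \<Rightarrow> 'a) \<Rightarrow> (nat \<Rightarrow> 'a \<Rightarrow> 'a) \<Rightarrow> ('a \<Rightarrow> 'ap set)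
    \<Rightarrow> nat \<Rightarrow> 'a \<Rightarrow> 'ap hform \<Rightarrow> bool" where
  "sat Q s t V n q (Atom p) = (p \<in> V q)"
| "sat Q s t V n q Bot = False"
| "sat Q s t V n q (Imp a b) = (sat Q s t V n q a \<longrightarrow> sat Q s t V n q b)"
| "sat Q s t V n q (DiaS a) = (\<exists>q' \<in> Q (Suc n). \<exists>i \<in> {1..Suc n}. s i q' = q \<and> sat Q s t V (Suc n) q' a)"
| "sat Q s t V n q (DiaT a) = (\<exists>i \<in> {1..n}. sat Q s t V (n - 1) (t i q) a)"

primrec subf :: "'ap hform \<Rightarrow> 'ap hform set" where
  "subf (Atom p) = {Atom p}"
| "subf Bot = {Bot}"
| "subf (Imp a b) = insert (Imp a b) (subf a \<union> subf b)"
| "subf (DiaS a) = insert (DiaS a) (subf a)"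
| "subf (DiaT a) = insert (DiaT a) (subf a)"

definition hequiv :: "(nat \<Rightarrow> 'a set) \<Rightarrow> (nat \<Rightarrow> 'a \<Rightarrow> 'a) \<Rightarrow> (nat \<Rightarrow> 'a \<Rightarrow> 'a) \<Rightarrow> ('a \<Rightarrow> 'ap set)
    \<Rightarrow> 'ap hform \<Rightarrow> nat \<Rightarrow> 'a \<Rightarrow> 'a \<Rightarrow> bool" where
  "hequiv Q s t V \<phi> n q q' \<longleftrightarrow> (\<forall>\<psi> \<in> subf \<phi>. sat Q s t V n q \<psi> \<longleftrightarrow> sat Q s t V n q' \<psi>)"

primrec fcls :: "(nat \<Rightarrow> 'a set) \<Rightarrow> (nat \<Rightarrow> 'a \<Rightarrow> 'a) \<Rightarrow> (nat \<Rightarrow> 'a \<Rightarrow> 'a) \<Rightarrow> ('a \<Rightarrow> 'ap set)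
    \<Rightarrow> 'ap hform \<Rightarrow> nat \<Rightarrow> 'a \<Rightarrow> 'a set" where
  "fcls Q s t V \<phi> 0 q = {q' \<in> Q 0. hequiv Q s t V \<phi> 0 q q'}"
| "fcls Q s t V \<phi> (Suc n) q = {q' \<in> Q (Suc n). hequiv Q s t V \<phi> (Suc n) q q' \<and>
      (\<forall>i \<in> {1..Suc n}. t i q' \<in> fcls Q s t V \<phi> n (t i q) \<and> s i q' \<in> fcls Q s t V \<phi> n (s i q))}"

definition Qf :: "(nat \<Rightarrow> 'a set) \<Rightarrow> (nat \<Rightarrow> 'a \<Rightarrow> 'a) \<Rightarrow> (nat \<Rightarrow> 'a \<Rightarrow> 'a) \<Rightarrow> ('a \<Rightarrow> 'ap set)
    \<Rightarrow> 'ap hform \<Rightarrow> nat \<Rightarrow> 'a set set" where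
  "Qf Q s t V \<phi> n = fcls Q s t V \<phi> n ` Q n"

definition face_f :: "(nat \<Rightarrow> 'a set) \<Rightarrow> (nat \<Rightarrow> 'a \<Rightarrow> 'a) \<Rightarrow> (nat \<Rightarrow> 'a \<Rightarrow> 'a) \<Rightarrow> ('a \<Rightarrow> 'ap set)
    \<Rightarrow> 'ap hform \<Rightarrow> (nat \<Rightarrow> 'a \<Rightarrow> 'a) \<Rightarrow> nat \<Rightarrow> 'a set \<Rightarrow> 'a set" where
  "face_f Q s t V \<phi> f i X = (THE Y. Y \<in> (\<Union>m. Qf Q s t V \<phi> m) \<and> (\<forall>p \<in> X. f i p \<in> Y))"

abbreviation sf where "sf Q s t V \<phi> \<equiv> face_f Q s t V \<phi> s"
abbreviation tf where "tf Q s t V \<phi> \<equiv> face_f Q s t V \<phi> t"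

end

theory Submission
  imports Defs
begin

context
  fixes Q :: "nat \<Rightarrow> 'a set" and s t :: "nat \<Rightarrow> 'a \<Rightarrow> 'a"
    and V :: "'a \<Rightarrow> 'ap set" and \<phi> :: "'ap hform"
  assumes cs: "cubical_set Q s t"
begin

lemma cs_disj: "m \<noteq> n \<Longrightarrow> x \<in> Q m \<Longrightarrow> x \<in> Q n \<Longrightarrow> False"
  using cs unfolding cubical_set_def by blast

lemma cs_face: "1 \<le> n \<Longrightarrow> i \<in> {1..n} \<Longrightarrow> q \<in> Q n \<Longrightarrow> f \<in> {s,t} \<Longrightarrow> f i q \<in> Q (n-1)"
  using cs unfolding cubical_set_def by blast

lemma cs_law: "q \<in> Q n \<Longrightarrow> 1 \<le> i \<Longrightarrow> i < j \<Longrightarrow> j \<le> n \<Longrightarrow> \<alpha> \<in> {s,t} \<Longrightarrow> \<beta> \<in> {s,t}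
   \<Longrightarrow> \<alpha> i (\<beta> j q) = \<beta> (j-1) (\<alpha> i q)"
  using cs unfolding cubical_set_def by blast

lemma cls_sub: "fcls Q s t V \<phi> n q \<subseteq> Q n"
  by (cases n) auto

lemma cls_refl: "q \<in> Q n \<Longrightarrow> q \<in> fcls Q s t V \<phi> n q"
proof (induction n arbitrary: q)
  case 0 then show ?case by (simp add: hequiv_def)
next
  case (Suc k)
  have "t i q \<in> Q k \<and> s i q \<in> Q k" if "i \<in> {1..Suc k}" for i
    using cs_face[of "Suc k" i q] Suc.prems that by auto
  then show ?case using Suc by (auto simp: hequiv_def)
qed

lemma cls_eq: "q \<in> Q n \<Longrightarrow> q' \<in> fcls Q s t V \<phi> n q \<Longrightarrow> fcls Q s t V \<phi> n q' = fcls Q s t V \<phi> n q"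
proof (induction n arbitrary: q q')
  case 0 then show ?case by (auto simp: hequiv_def)
next
  case (Suc k)
  have fq: "t i q \<in> Q k \<and> s i q \<in> Q k" if "i \<in> {1..Suc k}" for i
    using cs_face[of "Suc k" i q] Suc.prems that by auto
  have e: "fcls Q s t V \<phi> k (t i q') = fcls Q s t V \<phi> k (t i q) \<and>
           fcls Q s t V \<phi> k (s i q') = fcls Q s t V \<phi> k (s i q)" if "i \<in> {1..Suc k}" for i
    using Suc.IH fq[OF that] Suc.prems(2) that by auto
  have h: "hequiv Q s t V \<phi> (Suc k) q q'" using Suc.prems(2) by simp
  show ?case
  proof (rule set_eqI)
    fix x
    have "hequiv Q s t V \<phi> (Suc k) q' x \<longleftrightarrow> hequiv Q s t V \<phi> (Suc k) q x"
      using h by (auto simp: hequiv_def)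
    then show "x \<in> fcls Q s t V \<phi> (Suc k) q' \<longleftrightarrow> x \<in> fcls Q s t V \<phi> (Suc k) q"
      using e by simp
  qed
qed

lemma cls_face: "q \<in> Q n \<Longrightarrow> 1 \<le> n \<Longrightarrow> i \<in> {1..n} \<Longrightarrow> f \<in> {s,t} \<Longrightarrow> p \<in> fcls Q s t V \<phi> n q
   \<Longrightarrow> f i p \<in> fcls Q s t V \<phi> (n-1) (f i q)"
  by (cases n) auto

lemma cls_unique: "Y \<in> Qf Q s t V \<phi> m \<Longrightarrow> x \<in> Y \<Longrightarrow> x \<in> Q k \<Longrightarrow> m = k \<and> Y = fcls Q s t V \<phi> k x"
proof -
  assume Y: "Y \<in> Qf Q s t V \<phi> m" and x: "x \<in> Y" "x \<in> Q k"
  then obtain y where y: "y \<in> Q m" "Y = fcls Q s t V \<phi> m y" by (auto simp: Qf_def)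
  have "x \<in> Q m" using x y cls_sub by blast
  then have "m = k" using cs_disj x by blast
  then show ?thesis using cls_eq[of y m x] y x by simp
qed

lemma face_val: "q \<in> Q n \<Longrightarrow> 1 \<le> n \<Longrightarrow> i \<in> {1..n} \<Longrightarrow> f \<in> {s,t}
   \<Longrightarrow> face_f Q s t V \<phi> f i (fcls Q s t V \<phi> n q) = fcls Q s t V \<phi> (n-1) (f i q)
     \<and> (\<exists>!Y. Y \<in> Qf Q s t V \<phi> (n - 1) \<and> (\<forall>p \<in> fcls Q s t V \<phi> n q. f i p \<in> Y))"
proof -
  assume a: "q \<in> Q n" "1 \<le> n" "i \<in> {1..n}" "f \<in> {s,t}"
  have fq: "f i q \<in> Q (n-1)" using cs_face a by blast
  have inQf: "fcls Q s t V \<phi> (n-1) (f i q) \<in> Qf Q s t V \<phi> (n-1)"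
    using fq by (simp add: Qf_def)
  have all: "\<forall>p \<in> fcls Q s t V \<phi> n q. f i p \<in> fcls Q s t V \<phi> (n-1) (f i q)"
    using cls_face a by blast
  have qq: "q \<in> fcls Q s t V \<phi> n q" using cls_refl a by blast
  have uniq: "Y = fcls Q s t V \<phi> (n-1) (f i q)"
    if "Y \<in> Qf Q s t V \<phi> m" "\<forall>p \<in> fcls Q s t V \<phi> n q. f i p \<in> Y" for Y m
    using cls_unique[OF that(1) _ fq] that(2) qq by blast
  have "face_f Q s t V \<phi> f i (fcls Q s t V \<phi> n q) = fcls Q s t V \<phi> (n-1) (f i q)"
    unfolding face_f_def
    apply (rule the_equality)
    using inQf all uniq by blast+
  moreover have "\<exists>!Y. Y \<in> Qf Q s t V \<phi> (n - 1) \<and> (\<forall>p \<in> fcls Q s t V \<phi> n q. f i p \<in> Y)"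
    using inQf all uniq by blast
  ultimately show ?thesis by blast
qed

lemma part1: "1 \<le> n \<Longrightarrow> i \<in> {1..n} \<Longrightarrow> X \<in> Qf Q s t V \<phi> n \<Longrightarrow> f \<in> {s,t} \<Longrightarrow>
            (\<exists>!Y. Y \<in> Qf Q s t V \<phi> (n - 1) \<and> (\<forall>p \<in> X. f i p \<in> Y)) \<and>
            face_f Q s t V \<phi> f i X \<in> Qf Q s t V \<phi> (n - 1) \<and>
            (\<forall>p \<in> X. f i p \<in> face_f Q s t V \<phi> f i X)"
proof -
  assume a: "1 \<le> n" "i \<in> {1..n}" "X \<in> Qf Q s t V \<phi> n" "f \<in> {s,t}"
  then obtain q where q: "q \<in> Q n" "X = fcls Q s t V \<phi> n q" by (auto simp: Qf_def)
  have fq: "f i q \<in> Q (n-1)" using cs_face a q by blast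
  show ?thesis using face_val[OF q(1) a(1,2,4)] cls_face[OF q(1) a(1,2,4)] q fq
    by (auto simp: Qf_def)
qed

lemma part2: "X \<in> Qf Q s t V \<phi> n \<Longrightarrow> 1 \<le> i \<Longrightarrow> i < j \<Longrightarrow> j \<le> n \<Longrightarrow> \<alpha> \<in> {s,t} \<Longrightarrow> \<beta> \<in> {s,t} \<Longrightarrow>
   face_f Q s t V \<phi> \<alpha> i (face_f Q s t V \<phi> \<beta> j X)
              = face_f Q s t V \<phi> \<beta> (j - 1) (face_f Q s t V \<phi> \<alpha> i X)"
proof -
  assume a: "X \<in> Qf Q s t V \<phi> n" "1 \<le> i" "i < j" "j \<le> n" "\<alpha> \<in> {s,t}" "\<beta> \<in> {s,t}"
  then obtain q where q: "q \<in> Q n" "X = fcls Q s t V \<phi> n q" by (auto simp: Qf_def)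
  have bq: "\<beta> j q \<in> Q (n-1)" using cs_face a q by auto
  have aq: "\<alpha> i q \<in> Q (n-1)" using cs_face a q by auto
  have n1: "1 \<le> n" "1 \<le> n - 1" "j \<in> {1..n}" "i \<in> {1..n}" "i \<in> {1..n-1}" "j - 1 \<in> {1..n-1}"
    using a by auto
  have e1: "face_f Q s t V \<phi> \<beta> j X = fcls Q s t V \<phi> (n-1) (\<beta> j q)"
    using face_val[OF q(1) n1(1) n1(3) a(6)] q(2) by blast
  have e2: "face_f Q s t V \<phi> \<alpha> i (fcls Q s t V \<phi> (n-1) (\<beta> j q)) = fcls Q s t V \<phi> (n-1-1) (\<alpha> i (\<beta> j q))"
    using face_val[OF bq n1(2) n1(5) a(5)] by blast
  have e3: "face_f Q s t V \<phi> \<alpha> i X = fcls Q s t V \<phi> (n-1) (\<alpha> i q)"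
    using face_val[OF q(1) n1(1) n1(4) a(5)] q(2) by blast
  have e4: "face_f Q s t V \<phi> \<beta> (j-1) (fcls Q s t V \<phi> (n-1) (\<alpha> i q)) = fcls Q s t V \<phi> (n-1-1) (\<beta> (j-1) (\<alpha> i q))"
    using face_val[OF aq n1(2) n1(6) a(6)] by blast
  show ?thesis
    using e1 e2 e3 e4 cs_law[OF q(1) a(2,3,4,5,6)] by simp
qed

lemma part3: "cubical_set (Qf Q s t V \<phi>) (sf Q s t V \<phi>) (tf Q s t V \<phi>)"
proof -
  have d: "Qf Q s t V \<phi> m \<inter> Qf Q s t V \<phi> n = {}" if "m \<noteq> n" for m n
  proof (rule ccontr)
    assume "Qf Q s t V \<phi> m \<inter> Qf Q s t V \<phi> n \<noteq> {}"
    then obtain Y where Y: "Y \<in> Qf Q s t V \<phi> m" "Y \<in> Qf Q s t V \<phi> n" by blast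
    then obtain y where y: "y \<in> Q n" "Y = fcls Q s t V \<phi> n y" by (auto simp: Qf_def)
    have "y \<in> Y" using y cls_refl by blast
    then show False using cls_unique[OF Y(1) _ y(1)] that by blast
  qed
  have f: "\<forall>n \<ge> 1. \<forall>i \<in> {1..n}. \<forall>X \<in> Qf Q s t V \<phi> n.
      sf Q s t V \<phi> i X \<in> Qf Q s t V \<phi> (n - 1) \<and> tf Q s t V \<phi> i X \<in> Qf Q s t V \<phi> (n - 1)"
  proof (intro allI impI ballI conjI)
    fix n i X assume "1 \<le> n" "i \<in> {1..n}" "X \<in> Qf Q s t V \<phi> n"
    then show "sf Q s t V \<phi> i X \<in> Qf Q s t V \<phi> (n - 1)" "tf Q s t V \<phi> i X \<in> Qf Q s t V \<phi> (n - 1)"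
      using part1[of n i X s] part1[of n i X t] by auto
  qed
  have l: "\<forall>n. \<forall>q \<in> Qf Q s t V \<phi> n. \<forall>i j. 1 \<le> i \<and> i < j \<and> j \<le> n \<longrightarrow>
        (\<forall>\<alpha> \<in> {sf Q s t V \<phi>, tf Q s t V \<phi>}. \<forall>\<beta> \<in> {sf Q s t V \<phi>, tf Q s t V \<phi>}.
          \<alpha> i (\<beta> j q) = \<beta> (j - 1) (\<alpha> i q))"
  proof (intro allI impI ballI)
    fix n q i j \<alpha> \<beta>
    assume q: "q \<in> Qf Q s t V \<phi> n" and ij: "1 \<le> i \<and> i < j \<and> j \<le> n"
      and al: "\<alpha> \<in> {sf Q s t V \<phi>, tf Q s t V \<phi>}" and be: "\<beta> \<in> {sf Q s t V \<phi>, tf Q s t V \<phi>}"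
    from al obtain a where a: "a \<in> {s,t}" "\<alpha> = face_f Q s t V \<phi> a" by blast
    from be obtain b where b: "b \<in> {s,t}" "\<beta> = face_f Q s t V \<phi> b" by blast
    show "\<alpha> i (\<beta> j q) = \<beta> (j - 1) (\<alpha> i q)"
      using part2[OF q _ _ _ a(1) b(1), of i j] ij a(2) b(2) by simp
  qed
  show ?thesis unfolding cubical_set_def using d f l by blast
qed

end

theorem mainTheorem3:
  fixes Q :: "nat \<Rightarrow> 'a set" and s t :: "nat \<Rightarrow> 'a \<Rightarrow> 'a"
    and l :: "'a \<Rightarrow> 'sigma" and V :: "'a \<Rightarrow> 'ap set" and \<phi> :: "'ap hform"
  assumes "hdml_model Q s t l V"
  shows "(\<forall>n \<ge> 1. \<forall>i \<in> {1..n}. \<forall>X \<in> Qf Q s t V \<phi> n. \<forall>f \<in> {s, t}.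
            (\<exists>!Y. Y \<in> Qf Q s t V \<phi> (n - 1) \<and> (\<forall>p \<in> X. f i p \<in> Y)) \<and>
            face_f Q s t V \<phi> f i X \<in> Qf Q s t V \<phi> (n - 1) \<and>
            (\<forall>p \<in> X. f i p \<in> face_f Q s t V \<phi> f i X))
       \<and> (\<forall>n. \<forall>X \<in> Qf Q s t V \<phi> n. \<forall>i j. 1 \<le> i \<and> i < j \<and> j \<le> n \<longrightarrow>
            (\<forall>\<alpha> \<in> {s, t}. \<forall>\<beta> \<in> {s, t}.
              face_f Q s t V \<phi> \<alpha> i (face_f Q s t V \<phi> \<beta> j X)
              = face_f Q s t V \<phi> \<beta> (j - 1) (face_f Q s t V \<phi> \<alpha> i X)))
       \<and> cubical_set (Qf Q s t V \<phi>) (sf Q s t V \<phi>) (tf Q s t V \<phi>)"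
proof -
  have cs: "cubical_set Q s t" using assms by (simp add: hdml_model_def)
  show ?thesis
  proof (intro conjI)
    show "\<forall>n \<ge> 1. \<forall>i \<in> {1..n}. \<forall>X \<in> Qf Q s t V \<phi> n. \<forall>f \<in> {s, t}.
            (\<exists>!Y. Y \<in> Qf Q s t V \<phi> (n - 1) \<and> (\<forall>p \<in> X. f i p \<in> Y)) \<and>
            face_f Q s t V \<phi> f i X \<in> Qf Q s t V \<phi> (n - 1) \<and>
            (\<forall>p \<in> X. f i p \<in> face_f Q s t V \<phi> f i X)"
      by (intro allI impI ballI) (rule part1[OF cs])
    show "\<forall>n. \<forall>X \<in> Qf Q s t V \<phi> n. \<forall>i j. 1 \<le> i \<and> i < j \<and> j \<le> n \<longrightarrow>
            (\<forall>\<alpha> \<in> {s, t}. \<forall>\<beta> \<in> {s, t}.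
              face_f Q s t V \<phi> \<alpha> i (face_f Q s t V \<phi> \<beta> j X)
              = face_f Q s t V \<phi> \<beta> (j - 1) (face_f Q s t V \<phi> \<alpha> i X))"
      by (intro allI impI ballI) (rule part2[OF cs], assumption, blast, blast, blast, assumption, assumption)
    show "cubical_set (Qf Q s t V \<phi>) (sf Q s t V \<phi>) (tf Q s t V \<phi>)"
      by (rule part3[OF cs])
  qed
qed

end
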